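(* Assume claims arrive according to a fractional Poisson process with parameters $\lambda>0$, $0<\alpha\le1$, and the delays are exponential: $\overline W(x)=e^{-\beta x}$, $x\ge0$, $\beta>0$. Then for $t>0$, $$\mathbb{E}[Z(t)]=\frac{\mu_1\lambda e^{-\beta t}t^\alpha}{\Gamma(1+\alpha)}\,{}_1F_1(\alpha,1+\alpha,\beta t)=\mu_1e^{-\beta t}{}_1F_1(\alpha,1+\alpha,\beta t)\,m(t),$$ and for $\delta>0$, $$\mathbb{E}[Z_\delta(t)]=\frac{\mu_1\lambda\,\mathbb{E}[e^{-\delta L}]\,e^{-(\beta+\delta)t}t^\alpha}{\Gamma(1+\alpha)}\,{}_1F_1(\alpha,1+\alpha,\beta t),$$ where $\mathbb{E}[e^{-\delta L}]=\beta/(\beta+\delta)$. Moreover, as $t\to\infty$, $$\mathbb{E}[Z(t)]\sim\frac{\mu_1\lambda}{\beta\Gamma(\alpha)}t^{\alpha-1}=\mu_1\mathbb{E}[L]m'(t),\qquad \mathbb{E}[Z_\delta(t)]\sim\frac{\mu_1\lambda\,\mathbb{E}[e^{-\delta L}]}{\beta\Gamma(\alpha)}e^{-\delta t}t^{\alpha-1}.$$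
   Context: Claims arrive according to a renewal process with arrival times $T_1<T_2<\dots$; here it is the fractional Poisson process with parameters $\lambda>0$ and $0<\alpha\le1$, i.e. the renewal process (with Mittag-Leffler interarrival times) whose renewal function is $m(t)=\mathbb{E}[N(t)]=\lambda t^\alpha/\Gamma(1+\alpha)$, so $m'(t)=\lambda t^{\alpha-1}/\Gamma(\alpha)$, $t>0$. Claim amounts $X_i$ are i.i.d. with $\mu_k:=\mathbb{E}[X^k]$; delays $L_i$ are i.i.d. with generic copy $L$ and survival function $\overline W$; arrivals, amounts and delays are mutually independent. For $\delta\ge0$, $Z_\delta(t):=\sum_{i\ge1}e^{-\delta(T_i+L_i)}\mathbf{1}_{\{T_i\le t<T_i+L_i\}}X_i$, $Z:=Z_0$. ${}_1F_1(a,b,z)=\sum_{n\ge0}\frac{(a)_n}{(b)_n}\frac{z^n}{n!}$ is Kummer's confluent hypergeometric function, $(a)_n=a(a+1)\cdots(a+n-1)$, $(a)_0=1$. $g_1(t)\sim g_2(t)$ means $g_1(t)/g_2(t)\to1$. *)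

theory Defs
  imports "HOL-Probability.Probability" "HOL-Library.Landau_Symbols"
begin

definition mittag_leffler :: "real \<Rightarrow> real \<Rightarrow> real" where
  "mittag_leffler \<alpha> z = (\<Sum>k. z ^ k / Gamma (\<alpha> * real k + 1))"

definition hyp1F1 :: "real \<Rightarrow> real \<Rightarrow> real \<Rightarrow> real" where
  "hyp1F1 a b z = (\<Sum>n. pochhammer a n / pochhammer b n * z ^ n / fact n)"

text \<open>Arrival times: index i (from 0) corresponds to T_(i+1) = J_0 + ... + J_i,
  where J_0, J_1, ... are the interarrival times.\<close>
definition arrival_time :: "(nat \<Rightarrow> 'a \<Rightarrow> real) \<Rightarrow> nat \<Rightarrow> 'a \<Rightarrow> real" where
  "arrival_time J i \<omega> = (\<Sum>k\<le>i. J k \<omega>)"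

definition fpp_renewal_fun :: "real \<Rightarrow> real \<Rightarrow> real \<Rightarrow> real" where
  "fpp_renewal_fun lam \<alpha> t = lam * t powr \<alpha> / Gamma (1 + \<alpha>)"

text \<open>Fractional Poisson process (as a renewal process): i.i.d. interarrival times with
  Mittag-Leffler survival function P(J > t) = E_alpha(-lam t^alpha), whose renewal function
  E[N(t)] = E[sum_i 1{T_i <= t}] equals lam t^alpha / Gamma(1+alpha).\<close>
definition fractional_poisson_renewal ::
  "'a measure \<Rightarrow> real \<Rightarrow> real \<Rightarrow> (nat \<Rightarrow> 'a \<Rightarrow> real) \<Rightarrow> bool" where
  "fractional_poisson_renewal M lam \<alpha> J \<longleftrightarrow>
     (\<forall>i. J i \<in> borel_measurable M) \<and>
     prob_space.indep_vars M (\<lambda>_. borel) J UNIV \<and>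
     (\<forall>i. distr M borel (J i) = distr M borel (J 0)) \<and>
     (\<forall>t\<ge>0. measure M {\<omega> \<in> space M. J 0 \<omega> > t} = mittag_leffler \<alpha> (- (lam * t powr \<alpha>))) \<and>
     (\<forall>t\<ge>0. (\<integral>\<^sup>+ \<omega>. (\<Sum>i. indicator {\<omega> \<in> space M. arrival_time J i \<omega> \<le> t} \<omega>) \<partial>M)
              = ennreal (fpp_renewal_fun lam \<alpha> t))"

definition Zdelta ::
  "(nat \<Rightarrow> 'a \<Rightarrow> real) \<Rightarrow> (nat \<Rightarrow> 'a \<Rightarrow> real) \<Rightarrow> (nat \<Rightarrow> 'a \<Rightarrow> real) \<Rightarrow> real \<Rightarrow> real \<Rightarrow> 'a \<Rightarrow> real"
  where
  "Zdelta J X L \<delta> t \<omega> = (\<Sum>i. (if arrival_time J i \<omega> \<le> t \<and> t < arrival_time J i \<omega> + L i \<omega>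
        then exp (- \<delta> * (arrival_time J i \<omega> + L i \<omega>)) * X i \<omega> else 0))"

end

theory Submission
  imports Defs "HOL-Real_Asymp.Real_Asymp"
begin


definition fI :: "real \<Rightarrow> real \<Rightarrow> real \<Rightarrow> real" where
  "fI \<alpha> \<beta> s = exp (\<beta> * s) * s powr (\<alpha> - 1)"

definition Iv :: "real \<Rightarrow> real \<Rightarrow> real \<Rightarrow> real" where
  "Iv \<alpha> \<beta> t = t powr \<alpha> / \<alpha> * hyp1F1 \<alpha> (1 + \<alpha>) (\<beta> * t)"

lemma poch_ratio:
  assumes "(\<alpha>::real) > 0"
  shows "pochhammer \<alpha> n / pochhammer (1 + \<alpha>) n = \<alpha> / (\<alpha> + real n)"
proof -
  have "pochhammer \<alpha> (Suc n) = \<alpha> * pochhammer (\<alpha> + 1) n" by (rule pochhammer_rec)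
  moreover have "pochhammer \<alpha> (Suc n) = pochhammer \<alpha> n * (\<alpha> + real n)" by (simp add: pochhammer_Suc)
  moreover have "pochhammer (1 + \<alpha>) n > 0" using assms by (intro pochhammer_pos) auto
  moreover have "\<alpha> + real n > 0" using assms by auto
  ultimately show ?thesis by (simp add: field_simps add.commute)
qed

lemma hyp_summable:
  assumes "(\<alpha>::real) > 0" "z \<ge> 0"
  shows "summable (\<lambda>n. pochhammer \<alpha> n / pochhammer (1 + \<alpha>) n * z ^ n / fact n)"
proof (rule summable_comparison_test[OF _ summable_exp[of z, unfolded inverse_eq_divide times_divide_eq_left mult_1]])
  show "\<exists>N. \<forall>n\<ge>N. norm (pochhammer \<alpha> n / pochhammer (1 + \<alpha>) n * z ^ n / fact n) \<le> z ^ n / fact n"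
  proof (intro exI allI impI)
    fix n :: nat
    have r: "0 \<le> \<alpha> / (\<alpha> + real n)" "\<alpha> / (\<alpha> + real n) \<le> 1" using assms by auto
    have "0 \<le> z ^ n / fact n" using assms by auto
    have "pochhammer \<alpha> n / pochhammer (1 + \<alpha>) n * z ^ n / fact n = (\<alpha> / (\<alpha> + real n)) * (z ^ n / fact n)"
      unfolding poch_ratio[OF assms(1)] by simp
    then have eqn: "norm (pochhammer \<alpha> n / pochhammer (1 + \<alpha>) n * z ^ n / fact n) = (\<alpha> / (\<alpha> + real n)) * (z ^ n / fact n)"
      using r(1) \<open>0 \<le> z ^ n / fact n\<close> by (simp only: real_norm_def) (metis abs_of_nonneg mult_nonneg_nonneg)
    then show "norm (pochhammer \<alpha> n / pochhammer (1 + \<alpha>) n * z ^ n / fact n) \<le> z ^ n / fact n"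
      using mult_left_le_one_le[OF \<open>0 \<le> z ^ n / fact n\<close> r(1) r(2)] by (simp only: eqn)
  qed
qed

lemma Ifun_eq:
  assumes "\<alpha> > 0" "\<beta> \<ge> 0" "t \<ge> 0"
  shows "(\<integral>\<^sup>+ s. ennreal (fI \<alpha> \<beta> s) * indicator {0..t} s \<partial>lborel) = ennreal (Iv \<alpha> \<beta> t)"
    and "Iv \<alpha> \<beta> t \<ge> 0"
proof -
  define c where "c n = \<beta> ^ n / fact n * (t powr (real n + \<alpha>) / (real n + \<alpha>))" for n
  have tm: "(\<integral>\<^sup>+ s. ennreal (\<beta> ^ n / fact n * s powr (real n + \<alpha> - 1)) * indicator {0..t} s \<partial>lborel)
      = ennreal (c n)" for n
  proof -
    have "((\<lambda>s. s powr (real n + \<alpha> - 1)) has_integral (t powr (real n + \<alpha> - 1 + 1) / (real n + \<alpha> - 1 + 1))) {0..t}"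
      using assms by (intro has_integral_powr_from_0) auto
    then have "((\<lambda>s. \<beta> ^ n / fact n * s powr (real n + \<alpha> - 1)) has_integral (c n)) {0..t}"
      unfolding c_def by (intro has_integral_mult_right) simp
    then show ?thesis
      using assms by (intro nn_integral_has_integral_lebesgue') auto
  qed
  have cnn: "c n \<ge> 0" for n using assms by (auto simp: c_def)
  have c_eq: "c n = t powr \<alpha> / \<alpha> * (pochhammer \<alpha> n / pochhammer (1 + \<alpha>) n * (\<beta> * t) ^ n / fact n)" for n
  proof -
    have tp: "t powr (real n + \<alpha>) = t ^ n * t powr \<alpha>"
      using assms by (cases "t = 0") (auto simp: powr_add powr_realpow)
    show ?thesis unfolding c_def poch_ratio[OF assms(1)] tp using assms
      by (simp add: field_simps power_mult_distrib)
  qed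
  have hs: "summable (\<lambda>n. pochhammer \<alpha> n / pochhammer (1 + \<alpha>) n * (\<beta> * t) ^ n / fact n)"
    using assms by (intro hyp_summable) auto
  have csum: "c sums Iv \<alpha> \<beta> t"
    unfolding c_eq Iv_def hyp1F1_def by (intro sums_mult summable_sums hs)
  show "Iv \<alpha> \<beta> t \<ge> 0" using csum cnn by (metis sums_le sums_zero)
  have pw: "ennreal (fI \<alpha> \<beta> s) * indicator {0..t} s =
      (\<Sum>n. ennreal (\<beta> ^ n / fact n * s powr (real n + \<alpha> - 1)) * indicator {0..t} s)" for s
  proof (cases "s \<in> {0..t}")
    case True
    then have s0: "s \<ge> 0" by auto
    have e: "\<beta> ^ n / fact n * s powr (real n + \<alpha> - 1) = (\<beta> * s) ^ n / fact n * s powr (\<alpha> - 1)" for n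
    proof (cases "s = 0")
      case False
      then have "s powr (real n + \<alpha> - 1) = s ^ n * s powr (\<alpha> - 1)" using s0
        using powr_add[of s "real n" "\<alpha> - 1"] powr_realpow[of s n] s0 by (simp add: add_diff_eq)
      then show ?thesis by (simp add: power_mult_distrib)
    qed simp
    have sm: "(\<lambda>n. (\<beta> * s) ^ n / fact n * s powr (\<alpha> - 1)) sums (exp (\<beta> * s) * s powr (\<alpha> - 1))"
      using exp_converges[of "\<beta> * s"] by (intro sums_mult2) (simp add: scaleR_conv_of_real divide_inverse_commute)
    have "(\<Sum>n. ennreal (\<beta> ^ n / fact n * s powr (real n + \<alpha> - 1))) = ennreal (fI \<alpha> \<beta> s)"
      unfolding e fI_def using s0 assms sm
      by (subst suminf_ennreal2) (auto simp: sums_unique[symmetric] sums_summable)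
    then show ?thesis using True by (simp add: ennreal_suminf_multc)
  qed simp
  have "(\<integral>\<^sup>+ s. ennreal (fI \<alpha> \<beta> s) * indicator {0..t} s \<partial>lborel) =
      (\<Sum>n. \<integral>\<^sup>+ s. ennreal (\<beta> ^ n / fact n * s powr (real n + \<alpha> - 1)) * indicator {0..t} s \<partial>lborel)"
    unfolding pw by (intro nn_integral_suminf) auto
  also have "\<dots> = (\<Sum>n. ennreal (c n))" unfolding tm ..
  also have "\<dots> = ennreal (Iv \<alpha> \<beta> t)"
    using csum cnn by (subst suminf_ennreal2) (auto simp: sums_unique[symmetric] sums_summable)
  finally show "(\<integral>\<^sup>+ s. ennreal (fI \<alpha> \<beta> s) * indicator {0..t} s \<partial>lborel) = ennreal (Iv \<alpha> \<beta> t)" .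
qed


lemma fI_cont: "continuous_on {a..b} (fI \<alpha> \<beta>)" if "a > 0"
  using that unfolding fI_def by (auto intro!: continuous_intros)

lemma fI_meas[measurable]: "fI \<alpha> \<beta> \<in> borel_measurable borel"
  unfolding fI_def by measurable

lemma fI_nonneg: "s \<ge> 0 \<Longrightarrow> fI \<alpha> \<beta> s \<ge> 0"
  unfolding fI_def by auto

lemma Iv_split:
  assumes "\<alpha> > 0" "\<beta> \<ge> 0" "t \<ge> 1"
  shows "Iv \<alpha> \<beta> t = Iv \<alpha> \<beta> 1 + integral {1..t} (fI \<alpha> \<beta>)"
proof -
  have A: "(\<integral>\<^sup>+ s. ennreal (fI \<alpha> \<beta> s) * indicator {1..u} s \<partial>lborel) = ennreal (integral {1..u} (fI \<alpha> \<beta>))"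
    if "u \<ge> 1" for u
  proof (rule nn_integral_has_integral_lebesgue')
    show "(fI \<alpha> \<beta> has_integral integral {1..u} (fI \<alpha> \<beta>)) {1..u}"
      by (rule integrable_integral[OF integrable_continuous_interval[OF fI_cont]]) simp
  qed (auto intro!: fI_nonneg)
  have S: "(\<integral>\<^sup>+ s. ennreal (fI \<alpha> \<beta> s) * indicator {0..u} s \<partial>lborel) =
     (\<integral>\<^sup>+ s. ennreal (fI \<alpha> \<beta> s) * indicator {0..<1} s \<partial>lborel) + 
     (\<integral>\<^sup>+ s. ennreal (fI \<alpha> \<beta> s) * indicator {1..u} s \<partial>lborel)" if "u \<ge> 1" for u
  proof -
    have "ennreal (fI \<alpha> \<beta> s) * indicator {0..u} s = ennreal (fI \<alpha> \<beta> s) * indicator {0..<1} s + 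
       ennreal (fI \<alpha> \<beta> s) * indicator {1..u} s" for s
      using that by (auto simp: indicator_def)
    then have "(\<lambda>s. ennreal (fI \<alpha> \<beta> s) * indicator {0..u} s) = (\<lambda>s. ennreal (fI \<alpha> \<beta> s) * indicator {0..<1} s + 
       ennreal (fI \<alpha> \<beta> s) * indicator {1..u} s)" by (rule ext)
    moreover have "(\<lambda>x. ennreal (fI \<alpha> \<beta> x) * indicator {0..<1} x) \<in> borel_measurable borel" by measurable
    moreover have "(\<lambda>x. ennreal (fI \<alpha> \<beta> x) * indicator {1..u} x) \<in> borel_measurable borel" by measurable
    ultimately show ?thesis by (simp only:) (rule nn_integral_add; simp)
  qed
  have "ennreal (Iv \<alpha> \<beta> t) = ennreal (Iv \<alpha> \<beta> 1) + ennreal (integral {1..t} (fI \<alpha> \<beta>))"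
    using S[of t] S[of 1] A[of t] A[of 1] Ifun_eq(1)[OF assms(1,2), of t] Ifun_eq(1)[OF assms(1,2), of 1] assms
    by simp
  also have "\<dots> = ennreal (Iv \<alpha> \<beta> 1 + integral {1..t} (fI \<alpha> \<beta>))"
    using Ifun_eq(2)[OF assms(1,2), of 1] assms
    by (intro ennreal_plus[symmetric] integral_nonneg integrable_continuous_interval fI_cont) (auto intro!: fI_nonneg)
  finally show ?thesis
    using Ifun_eq(2)[OF assms(1,2), of 1] Ifun_eq(2)[OF assms(1,2), of t] assms
      integral_nonneg[OF integrable_continuous_interval[OF fI_cont[of 1 t \<alpha> \<beta>]], of ] fI_nonneg[of _ \<alpha> \<beta>]
    by (subst (asm) ennreal_inj) auto
qed

lemma Iv_deriv:
  assumes "\<alpha> > 0" "\<beta> \<ge> 0" "t > 1"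
  shows "(Iv \<alpha> \<beta> has_real_derivative fI \<alpha> \<beta> t) (at t)"
proof -
  have "((\<lambda>u. integral {1..u} (fI \<alpha> \<beta>)) has_real_derivative fI \<alpha> \<beta> t) (at t within {1..t+1})"
    using assms by (intro integral_has_real_derivative fI_cont) auto
  then have "((\<lambda>u. integral {1..u} (fI \<alpha> \<beta>)) has_real_derivative fI \<alpha> \<beta> t) (at t)"
    using assms by (subst (asm) at_within_Icc_at) auto
  then have "((\<lambda>u. Iv \<alpha> \<beta> 1 + integral {1..u} (fI \<alpha> \<beta>)) has_real_derivative fI \<alpha> \<beta> t) (at t)"
    by (auto intro!: derivative_eq_intros)
  moreover have "eventually (\<lambda>u. Iv \<alpha> \<beta> u = Iv \<alpha> \<beta> 1 + integral {1..u} (fI \<alpha> \<beta>)) (nhds t)"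
  proof -
    have "eventually (\<lambda>u. u \<in> {1<..}) (nhds t)" using assms by (intro eventually_nhds_in_open) auto
    then show ?thesis by (rule eventually_mono) (use assms in \<open>auto intro!: Iv_split\<close>)
  qed
  ultimately show ?thesis
    by (subst DERIV_cong_ev[OF refl _ refl]) auto
qed

lemma Iv_asymp:
  assumes "\<alpha> > 0" "\<alpha> \<le> 1" "\<beta> > 0"
  shows "((\<lambda>t. Iv \<alpha> \<beta> t / (exp (\<beta> * t) * t powr (\<alpha> - 1) / \<beta>)) \<longlongrightarrow> 1) at_top"
proof (rule lhospital_at_top_at_top[where f' = "fI \<alpha> \<beta>" and
      g' = "\<lambda>t. exp (\<beta> * t) * t powr (\<alpha> - 1) * (1 + (\<alpha> - 1) / (\<beta> * t))"])
  show "filterlim (\<lambda>t. exp (\<beta> * t) * t powr (\<alpha> - 1) / \<beta>) at_top at_top"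
    using assms by real_asymp
  have "eventually (\<lambda>t. 1 + (\<alpha> - 1) / (\<beta> * t) > 0) at_top"
    using assms by real_asymp
  then show "eventually (\<lambda>t. exp (\<beta> * t) * t powr (\<alpha> - 1) * (1 + (\<alpha> - 1) / (\<beta> * t)) \<noteq> 0) at_top"
    using eventually_gt_at_top[of 0] by eventually_elim auto
  show "eventually (\<lambda>t. DERIV (Iv \<alpha> \<beta>) t :> fI \<alpha> \<beta> t) at_top"
    using eventually_gt_at_top[of 1] by eventually_elim (use assms in \<open>auto intro!: Iv_deriv\<close>)
  show "eventually (\<lambda>t. DERIV (\<lambda>t. exp (\<beta> * t) * t powr (\<alpha> - 1) / \<beta>) t :>
      exp (\<beta> * t) * t powr (\<alpha> - 1) * (1 + (\<alpha> - 1) / (\<beta> * t))) at_top"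
    using eventually_gt_at_top[of 0]
  proof eventually_elim
    case (elim t)
    have e: "t powr (\<alpha> - 2) = t powr (\<alpha> - 1) / t"
    proof -
      have "t powr (\<alpha> - 2) = t powr ((\<alpha> - 1) - 1)" by simp
      also have "\<dots> = t powr (\<alpha> - 1) / t powr 1" by (rule powr_diff)
      finally show ?thesis using elim by simp
    qed
    show ?case using elim assms
      by (auto intro!: derivative_eq_intros simp: e field_simps)
  qed
  show "((\<lambda>t. fI \<alpha> \<beta> t / (exp (\<beta> * t) * t powr (\<alpha> - 1) * (1 + (\<alpha> - 1) / (\<beta> * t)))) \<longlongrightarrow> 1) at_top"
    unfolding fI_def using assms by real_asymp
qed




lemma measure_eqI_atMost:
  fixes M N :: "real measure"
  assumes sets: "sets M = sets borel" "sets N = sets borel"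
  assumes fin: "\<And>x. emeasure M {..x} < \<infinity>"
  assumes "\<And>x. emeasure M {..x} = emeasure N {..x}"
  shows "M = N"
proof (rule measure_eqI_generator_eq_countable)
  let ?LT = "\<lambda>a::real. {..a}" let ?E = "range ?LT"
  show "Int_stable ?E"
    by (auto simp: Int_stable_def)
  show "?E \<subseteq> Pow UNIV" "sets M = sigma_sets UNIV ?E" "sets N = sigma_sets UNIV ?E"
    unfolding sets borel_eq_atMost by auto
  show "?LT`Rats \<subseteq> ?E" by auto
  show "(\<Union>i\<in>Rats. ?LT i) = UNIV"
    using Rats_no_top_le by auto
  show "\<And>a. a \<in> ?LT`Rats \<Longrightarrow> emeasure M a \<noteq> \<infinity>"
    using fin by (auto simp: less_top)
qed (auto intro: assms countable_rat)

definition hr :: "real \<Rightarrow> real \<Rightarrow> real \<Rightarrow> real \<Rightarrow> real" where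
  "hr t \<delta> s l = (if s \<le> t \<and> t < s + l then exp (- \<delta> * (s + l)) else 0)"

lemma hr_meas[measurable]: "(\<lambda>(s, l). hr t \<delta> s l) \<in> borel_measurable (borel \<Otimes>\<^sub>M borel)"
  unfolding hr_def by measurable

locale fpp = prob_space M for M :: "'a measure" +
  fixes lam \<alpha> \<beta> :: real and J X L :: "nat \<Rightarrow> 'a \<Rightarrow> real"
  assumes lam: "lam > 0" and al: "0 < \<alpha>" "\<alpha> \<le> 1" and be: "\<beta> > 0"
    and fpr: "fractional_poisson_renewal M lam \<alpha> J"
    and Xm: "\<forall>i. X i \<in> borel_measurable M"
    and Xd: "\<forall>i. distr M borel (X i) = distr M borel (X 0)"
    and Xint: "integrable M (X 0)"
    and Lm: "\<forall>i. L i \<in> borel_measurable M"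
    and Ld: "\<forall>i. distr M borel (L i) = distr M borel (L 0)"
    and Ls: "\<forall>x\<ge>0. measure M {\<omega> \<in> space M. L 0 \<omega> > x} = exp (- \<beta> * x)"
    and ind: "indep_vars (\<lambda>_. borel) (case_sum J (case_sum X L)) UNIV"
begin

lemma Jm[measurable]: "J i \<in> borel_measurable M"
  using fpr unfolding fractional_poisson_renewal_def by auto

lemma Xm'[measurable]: "X i \<in> borel_measurable M" using Xm by auto
lemma Lm'[measurable]: "L i \<in> borel_measurable M" using Lm by auto

lemma Tm[measurable]: "arrival_time J i \<in> borel_measurable M"
  unfolding arrival_time_def by measurable

lemma renewal: "t \<ge> 0 \<Longrightarrow> (\<integral>\<^sup>+ \<omega>. (\<Sum>i. indicator {\<omega> \<in> space M. arrival_time J i \<omega> \<le> t} \<omega>) \<partial>M)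
              = ennreal (fpp_renewal_fun lam \<alpha> t)"
  using fpr unfolding fractional_poisson_renewal_def by auto

definition nu :: "real measure" where
  "nu = distr (count_space UNIV \<Otimes>\<^sub>M M) borel (\<lambda>(i, \<omega>). arrival_time J i \<omega>)"

lemma nu_meas: "(\<lambda>(i, \<omega>). arrival_time J i \<omega>) \<in> borel_measurable (count_space UNIV \<Otimes>\<^sub>M M)"
  by (rule measurable_pair_measure_countable1) auto

lemma nu_int:
  assumes [measurable]: "\<phi> \<in> borel_measurable borel"
  shows "(\<integral>\<^sup>+ s. \<phi> s \<partial>nu) = (\<Sum>i. \<integral>\<^sup>+ \<omega>. \<phi> (arrival_time J i \<omega>) \<partial>M)"
proof -
  have m: "(\<lambda>x. \<phi> (case x of (i, \<omega>) \<Rightarrow> arrival_time J i \<omega>)) \<in> borel_measurable (count_space UNIV \<Otimes>\<^sub>M M)"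
    using nu_meas by measurable
  have "(\<integral>\<^sup>+ s. \<phi> s \<partial>nu) = (\<integral>\<^sup>+ x. \<phi> (case x of (i, \<omega>) \<Rightarrow> arrival_time J i \<omega>) \<partial>(count_space UNIV \<Otimes>\<^sub>M M))"
    unfolding nu_def using nu_meas by (subst nn_integral_distr) auto
  also have "\<dots> = (\<integral>\<^sup>+ i. \<integral>\<^sup>+ \<omega>. \<phi> (arrival_time J i \<omega>) \<partial>M \<partial>count_space UNIV)"
    using nn_integral_fst[OF m] by simp
  also have "\<dots> = (\<Sum>i. \<integral>\<^sup>+ \<omega>. \<phi> (arrival_time J i \<omega>) \<partial>M)"
    by (rule nn_integral_count_space_nat)
  finally show ?thesis .
qed

lemma Gamma_1a: "Gamma (1 + \<alpha>) = \<alpha> * Gamma \<alpha>"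
proof -
  have "\<alpha> \<notin> \<int>\<^sub>\<le>\<^sub>0" using al nonpos_Ints_nonpos by force
  then show ?thesis using Gamma_plus1[of \<alpha>] by (simp add: add.commute)
qed

lemma Gamma_pos: "Gamma \<alpha> > 0" using al by (intro Gamma_real_pos) 

definition g :: "real \<Rightarrow> ennreal" where
  "g s = ennreal (lam / Gamma \<alpha> * s powr (\<alpha> - 1)) * indicator {0..} s"

lemma g_meas[measurable]: "g \<in> borel_measurable borel"
  unfolding g_def by measurable

lemma nu_atMost: "emeasure nu {..t} = (if t \<ge> 0 then ennreal (fpp_renewal_fun lam \<alpha> t) else 0)"
proof -
  have A: "emeasure nu {..u} = ennreal (fpp_renewal_fun lam \<alpha> u)" if "u \<ge> 0" for u
  proof -
    have "emeasure nu {..u} = (\<integral>\<^sup>+ s. indicator {..u} s \<partial>nu)"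
      by (simp add: nu_def)
    also have "\<dots> = (\<Sum>i. \<integral>\<^sup>+ \<omega>. indicator {..u} (arrival_time J i \<omega>) \<partial>M)"
      by (rule nu_int) simp
    also have "\<dots> = (\<integral>\<^sup>+ \<omega>. (\<Sum>i. indicator {..u} (arrival_time J i \<omega>)) \<partial>M)"
      by (rule nn_integral_suminf[symmetric]) simp
    also have "\<dots> = (\<integral>\<^sup>+ \<omega>. (\<Sum>i. indicator {\<omega> \<in> space M. arrival_time J i \<omega> \<le> u} \<omega>) \<partial>M)"
      by (intro nn_integral_cong) (auto simp: indicator_def)
    finally show ?thesis using renewal[OF that] by simp
  qed
  show ?thesis
  proof (cases "t \<ge> 0")
    case False
    have "emeasure nu {..t} \<le> emeasure nu {..0}"
      using False by (intro emeasure_mono) (auto simp: nu_def)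
    also have "\<dots> = 0" using A[of 0] al by (simp add: fpp_renewal_fun_def)
    finally show ?thesis using False by simp
  qed (use A in auto)
qed

lemma dens_atMost: "emeasure (density lborel g) {..t} = (if t \<ge> 0 then ennreal (fpp_renewal_fun lam \<alpha> t) else 0)"
proof -
  have "emeasure (density lborel g) {..t} = (\<integral>\<^sup>+ s. g s * indicator {..t} s \<partial>lborel)"
    by (subst emeasure_density) auto
  also have "\<dots> = (\<integral>\<^sup>+ s. ennreal (lam / Gamma \<alpha> * s powr (\<alpha> - 1)) * indicator {0..t} s \<partial>lborel)"
    unfolding g_def by (intro nn_integral_cong) (auto simp: indicator_def)
  also have "\<dots> = (if t \<ge> 0 then ennreal (fpp_renewal_fun lam \<alpha> t) else 0)"
  proof (cases "t \<ge> 0")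
    case True
    have "((\<lambda>s. s powr (\<alpha> - 1)) has_integral (t powr (\<alpha> - 1 + 1) / (\<alpha> - 1 + 1))) {0..t}"
      using True al by (intro has_integral_powr_from_0) auto
    then have "((\<lambda>s. lam / Gamma \<alpha> * s powr (\<alpha> - 1)) has_integral (fpp_renewal_fun lam \<alpha> t)) {0..t}"
      unfolding fpp_renewal_fun_def Gamma_1a using al
      by (intro has_integral_mult_right[THEN has_integral_eq_rhs]) (auto simp: field_simps)
    then show ?thesis using True lam Gamma_pos
      by (subst nn_integral_has_integral_lebesgue') auto
  qed simp
  finally show ?thesis .
qed

lemma nu_eq: "nu = density lborel g"
proof (rule measure_eqI_atMost)
  show "sets nu = sets borel" by (simp add: nu_def)
  show "sets (density lborel g) = sets borel" by simp
  show "emeasure nu {..x} < \<infinity>" for x by (simp add: nu_atMost)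
  show "emeasure nu {..x} = emeasure (density lborel g) {..x}" for x
    by (simp add: nu_atMost dens_atMost)
qed

lemma sum_T:
  assumes [measurable]: "\<phi> \<in> borel_measurable borel"
  shows "(\<Sum>i. \<integral>\<^sup>+ \<omega>. \<phi> (arrival_time J i \<omega>) \<partial>M) = (\<integral>\<^sup>+ s. g s * \<phi> s \<partial>lborel)"
  using nu_int[OF assms] unfolding nu_eq by (simp add: nn_integral_density)

end



context fpp begin

lemma indep_TL: "indep_var borel (arrival_time J i) borel (L i)"
proof -
  let ?Y = "case_sum J (case_sum X L)"
  have "indep_var (PiM (Inl ` {..i}) (\<lambda>_. borel)) (\<lambda>\<omega>. restrict (\<lambda>j. ?Y j \<omega>) (Inl ` {..i}))
      (PiM {Inr (Inr i)} (\<lambda>_. borel)) (\<lambda>\<omega>. restrict (\<lambda>j. ?Y j \<omega>) {Inr (Inr i)})"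
    by (rule indep_var_restrict[OF ind]) auto
  then have "indep_var borel ((\<lambda>f. \<Sum>k\<le>i. f (Inl k)) \<circ> (\<lambda>\<omega>. restrict (\<lambda>j. ?Y j \<omega>) (Inl ` {..i})))
      borel ((\<lambda>f. f (Inr (Inr i))) \<circ> (\<lambda>\<omega>. restrict (\<lambda>j. ?Y j \<omega>) {Inr (Inr i)}))"
    by (rule indep_var_compose) (auto intro!: borel_measurable_sum measurable_component_singleton)
  moreover have "(\<lambda>f. \<Sum>k\<le>i. f (Inl k)) \<circ> (\<lambda>\<omega>. restrict (\<lambda>j. ?Y j \<omega>) (Inl ` {..i})) = arrival_time J i"
    by (auto simp: arrival_time_def fun_eq_iff intro!: sum.cong)
  moreover have "(\<lambda>f. f (Inr (Inr i))) \<circ> (\<lambda>\<omega>. restrict (\<lambda>j. ?Y j \<omega>) {Inr (Inr i)}) = L i"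
    by (auto simp: fun_eq_iff)
  ultimately show ?thesis by simp
qed

lemma indep_XH:
  "indep_var borel (X i) borel (\<lambda>\<omega>. hr t \<delta> (arrival_time J i \<omega>) (L i \<omega>))"
proof -
  let ?Y = "case_sum J (case_sum X L)"
  let ?B = "Inl ` {..i} \<union> {Inr (Inr i)}"
  have "indep_var (PiM {Inr (Inl i)} (\<lambda>_. borel)) (\<lambda>\<omega>. restrict (\<lambda>j. ?Y j \<omega>) {Inr (Inl i)})
      (PiM ?B (\<lambda>_. borel)) (\<lambda>\<omega>. restrict (\<lambda>j. ?Y j \<omega>) ?B)"
    by (rule indep_var_restrict[OF ind]) auto
  moreover have "(\<lambda>f. hr t \<delta> (\<Sum>k\<le>i. f (Inl k)) (f (Inr (Inr i)))) \<in> borel_measurable (PiM ?B (\<lambda>_. borel))"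
  proof -
    have [measurable]: "(\<lambda>f. \<Sum>k\<le>i. (f (Inl k) :: real)) \<in> borel_measurable (PiM ?B (\<lambda>_. borel))"
      by (intro borel_measurable_sum measurable_component_singleton) auto
    have [measurable]: "(\<lambda>f. f (Inr (Inr i)) :: real) \<in> borel_measurable (PiM ?B (\<lambda>_. borel))"
      by (auto intro!: measurable_component_singleton)
    show ?thesis by measurable
  qed
  ultimately have "indep_var borel ((\<lambda>f. f (Inr (Inl i))) \<circ> (\<lambda>\<omega>. restrict (\<lambda>j. ?Y j \<omega>) {Inr (Inl i)}))
      borel ((\<lambda>f. hr t \<delta> (\<Sum>k\<le>i. f (Inl k)) (f (Inr (Inr i)))) \<circ> (\<lambda>\<omega>. restrict (\<lambda>j. ?Y j \<omega>) ?B))"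
    by (intro indep_var_compose) (auto intro!: measurable_component_singleton)
  moreover have "(\<lambda>f. f (Inr (Inl i))) \<circ> (\<lambda>\<omega>. restrict (\<lambda>j. ?Y j \<omega>) {Inr (Inl i)}) = X i"
    by (auto simp: fun_eq_iff)
  moreover have "(\<lambda>f. hr t \<delta> (\<Sum>k\<le>i. f (Inl k)) (f (Inr (Inr i)))) \<circ> (\<lambda>\<omega>. restrict (\<lambda>j. ?Y j \<omega>) ?B)
      = (\<lambda>\<omega>. hr t \<delta> (arrival_time J i \<omega>) (L i \<omega>))"
  proof -
    have "(\<Sum>k\<le>i. restrict (\<lambda>j. ?Y j \<omega>) ?B (Inl k)) = arrival_time J i \<omega>" for \<omega>
      by (auto simp: arrival_time_def intro!: sum.cong)
    then show ?thesis by (auto simp: fun_eq_iff)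
  qed
  ultimately show ?thesis by simp
qed

lemma L_exp: "distributed M lborel (L 0) (exponential_density \<beta>)"
proof (subst exponential_distributed_iff[OF be], safe)
  show "random_variable borel (L 0)" by simp
  fix a :: real assume a: "0 \<le> a"
  have "{x \<in> space M. L 0 x \<le> a} = space M - {x \<in> space M. L 0 x > a}" by auto
  then have "\<P>(x in M. L 0 x \<le> a) = 1 - \<P>(x in M. L 0 x > a)"
    by (simp add: prob_compl)
  then show "\<P>(x in M. L 0 x \<le> a) = 1 - exp (- a * \<beta>)"
    using Ls a by (simp add: mult.commute)
qed


lemma hr_meas2[measurable]: "hr t \<delta> s \<in> borel_measurable borel"
  unfolding hr_def by measurable

lemma phi_eq:
  assumes t: "t > 0" and d: "\<delta> \<ge> 0"
  shows "(\<integral>\<^sup>+ l. ennreal (hr t \<delta> s l) \<partial>(distr M borel (L 0))) =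
    ennreal (\<beta> / (\<beta> + \<delta>) * exp (- (\<beta> + \<delta>) * t) * exp (\<beta> * s)) * indicator {..t} s"
proof -
  have "(\<integral>\<^sup>+ l. ennreal (hr t \<delta> s l) \<partial>(distr M borel (L 0))) = (\<integral>\<^sup>+ \<omega>. ennreal (hr t \<delta> s (L 0 \<omega>)) \<partial>M)"
    by (subst nn_integral_distr) auto
  also have "\<dots> = (\<integral>\<^sup>+ l. ennreal (exponential_density \<beta> l) * ennreal (hr t \<delta> s l) \<partial>lborel)"
    by (rule distributed_nn_integral[OF L_exp, symmetric]) simp
  also have "\<dots> = ennreal (\<beta> / (\<beta> + \<delta>) * exp (- (\<beta> + \<delta>) * t) * exp (\<beta> * s)) * indicator {..t} s"
  proof (cases "s \<le> t")
    case True
    define c where "c = t - s"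
    have c0: "c \<ge> 0" using True by (simp add: c_def)
    have "(\<integral>\<^sup>+ l. ennreal (exponential_density \<beta> l) * ennreal (hr t \<delta> s l) \<partial>lborel) =
        (\<integral>\<^sup>+ l. ennreal (\<beta> * exp (- \<delta> * s) * exp (- (\<beta> + \<delta>) * l)) * indicator {c..} l \<partial>lborel)"
    proof (rule nn_integral_cong_AE)
      show "AE l in lborel. ennreal (exponential_density \<beta> l) * ennreal (hr t \<delta> s l) =
          ennreal (\<beta> * exp (- \<delta> * s) * exp (- (\<beta> + \<delta>) * l)) * indicator {c..} l"
        using AE_lborel_singleton[of c]
      proof eventually_elim
        case (elim l)
        show ?case
        proof (cases "l > c")
          case True
          then have l0: "l \<ge> 0" "\<not> l < 0" using c0 by auto
          have e: "exp (- l * \<beta>) * exp (- \<delta> * (s + l)) = exp (- \<delta> * s) * exp (- (\<beta> + \<delta>) * l)"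
            by (simp add: mult_exp_exp algebra_simps)
          have "ennreal (\<beta> * exp (- l * \<beta>)) * ennreal (exp (- \<delta> * (s + l))) = ennreal (\<beta> * (exp (- l * \<beta>) * exp (- \<delta> * (s + l))))"
            using be by (simp add: ennreal_mult[symmetric])
          then show ?thesis using True l0 be c0[unfolded c_def] unfolding exponential_density_def hr_def c_def e
            by (simp add: mult.assoc)
        next
          case False
          then have "l < c" using elim by auto
          then show ?thesis unfolding hr_def c_def by auto
        qed
      qed
    qed
    also have "\<dots> = ennreal (\<beta> * exp (- \<delta> * s) * (exp (- (\<beta> + \<delta>) * c) / (\<beta> + \<delta>)))"
    proof (rule nn_integral_has_integral_lebesgue')
      show "((\<lambda>l. \<beta> * exp (- \<delta> * s) * exp (- (\<beta> + \<delta>) * l)) has_integral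
          \<beta> * exp (- \<delta> * s) * (exp (- (\<beta> + \<delta>) * c) / (\<beta> + \<delta>))) {c..}"
        using be d by (intro has_integral_mult_right has_integral_exp_minus_to_infinity) auto
    qed (use be in auto)
    also have "\<beta> * exp (- \<delta> * s) * (exp (- (\<beta> + \<delta>) * c) / (\<beta> + \<delta>)) =
        \<beta> / (\<beta> + \<delta>) * exp (- (\<beta> + \<delta>) * t) * exp (\<beta> * s)"
    proof -
      have "exp (- \<delta> * s) * exp (- (\<beta> + \<delta>) * c) = exp (- (\<beta> + \<delta>) * t) * exp (\<beta> * s)"
        unfolding c_def by (simp add: mult_exp_exp algebra_simps)
      then show ?thesis by (simp add: field_simps)
    qed
    finally show ?thesis using True by simp
  next
    case False
    then show ?thesis by (simp add: hr_def)
  qed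
  finally show ?thesis .
qed

lemma EH:
  assumes t: "t > 0" and d: "\<delta> \<ge> 0"
  shows "(\<integral>\<^sup>+ \<omega>. ennreal (hr t \<delta> (arrival_time J i \<omega>) (L i \<omega>)) \<partial>M) =
    (\<integral>\<^sup>+ \<omega>. ennreal (\<beta> / (\<beta> + \<delta>) * exp (- (\<beta> + \<delta>) * t) * exp (\<beta> * arrival_time J i \<omega>)) * indicator {..t} (arrival_time J i \<omega>) \<partial>M)"
proof -
  let ?DT = "distr M borel (arrival_time J i)" and ?DL = "distr M borel (L i)"
  interpret DL: prob_space ?DL by (rule prob_space_distr) simp
  have eq: "?DT \<Otimes>\<^sub>M ?DL = distr M (borel \<Otimes>\<^sub>M borel) (\<lambda>x. (arrival_time J i x, L i x))"
    using indep_TL[of i] unfolding indep_var_distribution_eq by auto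
  have m: "(\<lambda>(s, l). ennreal (hr t \<delta> s l)) \<in> borel_measurable (borel \<Otimes>\<^sub>M borel)"
    by measurable
  have "(\<integral>\<^sup>+ \<omega>. ennreal (hr t \<delta> (arrival_time J i \<omega>) (L i \<omega>)) \<partial>M) =
      (\<integral>\<^sup>+ p. (\<lambda>(s, l). ennreal (hr t \<delta> s l)) p \<partial>distr M (borel \<Otimes>\<^sub>M borel) (\<lambda>x. (arrival_time J i x, L i x)))"
    using m by (subst nn_integral_distr) auto
  also have "\<dots> = (\<integral>\<^sup>+ p. (\<lambda>(s, l). ennreal (hr t \<delta> s l)) p \<partial>(?DT \<Otimes>\<^sub>M ?DL))"
    unfolding eq ..
  also have "\<dots> = (\<integral>\<^sup>+ s. \<integral>\<^sup>+ l. ennreal (hr t \<delta> s l) \<partial>?DL \<partial>?DT)"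
    using DL.nn_integral_fst[of "\<lambda>(s, l). ennreal (hr t \<delta> s l)" ?DT] m by simp
  also have "\<dots> = (\<integral>\<^sup>+ s. ennreal (\<beta> / (\<beta> + \<delta>) * exp (- (\<beta> + \<delta>) * t) * exp (\<beta> * s)) * indicator {..t} s \<partial>?DT)"
  proof -
    have "?DL = distr M borel (L 0)" using Ld by auto
    then show ?thesis by (simp only: phi_eq[OF t d])
  qed
  also have "\<dots> = (\<integral>\<^sup>+ \<omega>. ennreal (\<beta> / (\<beta> + \<delta>) * exp (- (\<beta> + \<delta>) * t) * exp (\<beta> * arrival_time J i \<omega>)) * indicator {..t} (arrival_time J i \<omega>) \<partial>M)"
    by (subst nn_integral_distr) auto
  finally show ?thesis .
qed

end



context fpp begin

definition K :: "real \<Rightarrow> real \<Rightarrow> real" where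
  "K t \<delta> = \<beta> / (\<beta> + \<delta>) * exp (- (\<beta> + \<delta>) * t)"

definition R :: "real \<Rightarrow> real \<Rightarrow> real" where
  "R t \<delta> = lam / Gamma \<alpha> * K t \<delta> * Iv \<alpha> \<beta> t"

lemma K_nonneg: "\<delta> \<ge> 0 \<Longrightarrow> K t \<delta> \<ge> 0"
  using be unfolding K_def by auto

lemma R_nonneg: "t \<ge> 0 \<Longrightarrow> \<delta> \<ge> 0 \<Longrightarrow> R t \<delta> \<ge> 0"
  unfolding R_def using K_nonneg[of \<delta> t] lam Gamma_pos Ifun_eq(2)[of \<alpha> \<beta> t] al be by auto

lemma sumEH:
  assumes t: "t > 0" and d: "\<delta> \<ge> 0"
  shows "(\<Sum>i. \<integral>\<^sup>+ \<omega>. ennreal (hr t \<delta> (arrival_time J i \<omega>) (L i \<omega>)) \<partial>M) = ennreal (R t \<delta>)"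
proof -
  have "(\<Sum>i. \<integral>\<^sup>+ \<omega>. ennreal (hr t \<delta> (arrival_time J i \<omega>) (L i \<omega>)) \<partial>M) =
     (\<Sum>i. \<integral>\<^sup>+ \<omega>. (\<lambda>s. ennreal (K t \<delta> * exp (\<beta> * s)) * indicator {..t} s) (arrival_time J i \<omega>) \<partial>M)"
    using EH[OF t d] unfolding K_def by simp
  also have "\<dots> = (\<integral>\<^sup>+ s. g s * (ennreal (K t \<delta> * exp (\<beta> * s)) * indicator {..t} s) \<partial>lborel)"
    by (rule sum_T) simp
  also have "\<dots> = (\<integral>\<^sup>+ s. ennreal (lam / Gamma \<alpha> * K t \<delta>) * (ennreal (fI \<alpha> \<beta> s) * indicator {0..t} s) \<partial>lborel)"
  proof (rule nn_integral_cong)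
    fix s :: real
    show "g s * (ennreal (K t \<delta> * exp (\<beta> * s)) * indicator {..t} s) =
        ennreal (lam / Gamma \<alpha> * K t \<delta>) * (ennreal (fI \<alpha> \<beta> s) * indicator {0..t} s)"
    proof (cases "s \<in> {0..t}")
      case True
      have nn: "0 \<le> lam / Gamma \<alpha>" "0 \<le> K t \<delta>" "0 \<le> s powr (\<alpha> - 1)" "0 \<le> exp (\<beta> * s)"
        using lam Gamma_pos K_nonneg[OF d] by auto
      have "ennreal (lam / Gamma \<alpha> * s powr (\<alpha> - 1)) * ennreal (K t \<delta> * exp (\<beta> * s)) =
          ennreal (lam / Gamma \<alpha> * K t \<delta>) * ennreal (fI \<alpha> \<beta> s)"
      proof -
        have e1: "ennreal (lam / Gamma \<alpha> * s powr (\<alpha> - 1)) * ennreal (K t \<delta> * exp (\<beta> * s)) =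
            ennreal ((lam / Gamma \<alpha> * s powr (\<alpha> - 1)) * (K t \<delta> * exp (\<beta> * s)))"
          using nn by (intro ennreal_mult[symmetric] mult_nonneg_nonneg) auto
        have e2: "ennreal (lam / Gamma \<alpha> * K t \<delta>) * ennreal (exp (\<beta> * s) * s powr (\<alpha> - 1)) =
            ennreal ((lam / Gamma \<alpha> * K t \<delta>) * (exp (\<beta> * s) * s powr (\<alpha> - 1)))"
          using nn by (intro ennreal_mult[symmetric] mult_nonneg_nonneg) auto
        show ?thesis unfolding fI_def e1 e2 by (simp add: mult_ac)
      qed
      then show ?thesis using True unfolding g_def by (simp add: mult_ac)
    qed (auto simp: g_def indicator_def)
  qed
  also have "\<dots> = ennreal (lam / Gamma \<alpha> * K t \<delta>) * ennreal (Iv \<alpha> \<beta> t)"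
    using Ifun_eq(1)[of \<alpha> \<beta> t] al be t by (subst nn_integral_cmult) auto
  also have "\<dots> = ennreal (R t \<delta>)"
    unfolding R_def using lam Gamma_pos K_nonneg[OF d] Ifun_eq(2)[of \<alpha> \<beta> t] al be t
    by (subst ennreal_mult[symmetric]) (auto intro!: mult_nonneg_nonneg divide_nonneg_pos)
  finally show ?thesis .
qed


lemma hr_bounds: assumes "t > 0" "\<delta> \<ge> 0" shows "0 \<le> hr t \<delta> s l" "hr t \<delta> s l \<le> 1"
proof -
  show "0 \<le> hr t \<delta> s l" unfolding hr_def by auto
  show "hr t \<delta> s l \<le> 1"
  proof (cases "s \<le> t \<and> t < s + l")
    case True
    then have "- \<delta> * (s + l) \<le> 0" using assms by (intro mult_nonpos_nonneg) auto
    then show ?thesis using True unfolding hr_def by auto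
  qed (auto simp: hr_def)
qed

lemma X_int: "integrable M (X i)"
proof -
  have "integrable (distr M borel (X 0)) (\<lambda>x. x)"
    using Xint by (subst integrable_distr_eq) auto
  then have "integrable (distr M borel (X i)) (\<lambda>x. x)" using Xd by metis
  then show ?thesis by (subst (asm) integrable_distr_eq) auto
qed

lemma X_mean: "(\<integral>\<omega>. (f :: real \<Rightarrow> real) (X i \<omega>) \<partial>M) = (\<integral>\<omega>. f (X 0 \<omega>) \<partial>M)" if [measurable]: "f \<in> borel_measurable borel"
proof -
  have "(\<integral>\<omega>. f (X i \<omega>) \<partial>M) = integral\<^sup>L (distr M borel (X i)) f"
    by (rule integral_distr[symmetric]) auto
  also have "\<dots> = integral\<^sup>L (distr M borel (X 0)) f" using Xd by metis
  also have "\<dots> = (\<integral>\<omega>. f (X 0 \<omega>) \<partial>M)"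
    by (subst integral_distr) auto
  finally show ?thesis .
qed

lemma main_expect:
  assumes t: "t > 0" and d: "\<delta> \<ge> 0"
  shows "(\<integral>\<omega>. Zdelta J X L \<delta> t \<omega> \<partial>M) = (\<integral>\<omega>. X 0 \<omega> \<partial>M) * R t \<delta>"
proof -
  define H where "H i \<omega> = hr t \<delta> (arrival_time J i \<omega>) (L i \<omega>)" for i \<omega>
  define tm where "tm i \<omega> = (if arrival_time J i \<omega> \<le> t \<and> t < arrival_time J i \<omega> + L i \<omega>
        then exp (- \<delta> * (arrival_time J i \<omega> + L i \<omega>)) * X i \<omega> else 0)" for i \<omega>
  define r where "r i = (\<integral>\<omega>. H i \<omega> \<partial>M)" for i
  define EA where "EA = (\<integral>\<omega>. \<bar>X 0 \<omega>\<bar> \<partial>M)"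
  have Hm[measurable]: "H i \<in> borel_measurable M" for i unfolding H_def by measurable
  have H01: "0 \<le> H i \<omega>" "H i \<omega> \<le> 1" for i \<omega> unfolding H_def using hr_bounds[OF t d] by auto
  have H_int: "integrable M (H i)" for i
    using H01 by (intro integrable_const_bound[where B=1]) auto
  have r_nn: "r i \<ge> 0" for i unfolding r_def using H01 by auto
  have r_enn: "ennreal (r i) = (\<integral>\<^sup>+ \<omega>. ennreal (hr t \<delta> (arrival_time J i \<omega>) (L i \<omega>)) \<partial>M)" for i
    using H_int[of i] H01 unfolding r_def H_def by (subst nn_integral_eq_integral) auto
  have r_sum: "(\<Sum>i. ennreal (r i)) = ennreal (R t \<delta>)" unfolding r_enn by (rule sumEH[OF t d])
  have r_summable: "summable r" using r_sum r_nn by (intro summable_suminf_not_top) auto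
  have "ennreal (suminf r) = ennreal (R t \<delta>)" using r_sum r_nn r_summable by (simp add: suminf_ennreal2)
  then have "suminf r = R t \<delta>" using R_nonneg[of t \<delta>] t d r_nn r_summable
    by (subst (asm) ennreal_inj) (auto intro!: suminf_nonneg)
  then have r_sums: "r sums R t \<delta>" using r_summable by (simp add: sums_iff)
  have tm_eq: "tm i \<omega> = X i \<omega> * H i \<omega>" for i \<omega> unfolding tm_def H_def hr_def by auto
  have tm_abs: "\<bar>tm i \<omega>\<bar> = \<bar>X i \<omega>\<bar> * H i \<omega>" for i \<omega> unfolding tm_eq using H01 by (simp add: abs_mult)
  have ind1: "indep_var borel (X i) borel (H i)" for i unfolding H_def by (rule indep_XH)
  have ind2: "indep_var borel (\<lambda>\<omega>. \<bar>X i \<omega>\<bar>) borel (H i)" for i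
  proof -
    have "indep_var borel (abs \<circ> X i) borel ((\<lambda>x. x) \<circ> H i)"
      by (rule indep_var_compose[OF ind1[of i]]) auto
    moreover have "abs \<circ> X i = (\<lambda>\<omega>. \<bar>X i \<omega>\<bar>)" "(\<lambda>x. x) \<circ> H i = H i" by (auto simp: fun_eq_iff)
    ultimately show ?thesis by metis
  qed
  have tm_int: "integrable M (tm i)" for i
    unfolding tm_eq using indep_var_integrable[OF ind1 X_int H_int] by simp
  have tm_E: "(\<integral>\<omega>. tm i \<omega> \<partial>M) = (\<integral>\<omega>. X 0 \<omega> \<partial>M) * r i" for i
    unfolding tm_eq r_def using indep_var_lebesgue_integral[OF ind1 X_int H_int] X_mean[of "\<lambda>x. x" i] by simp
  have tm_absE: "(\<integral>\<omega>. norm (tm i \<omega>) \<partial>M) = EA * r i" for i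
  proof -
    have "(\<integral>\<omega>. norm (tm i \<omega>) \<partial>M) = (\<integral>\<omega>. \<bar>X i \<omega>\<bar> * H i \<omega> \<partial>M)" unfolding real_norm_def tm_abs ..
    also have "\<dots> = (\<integral>\<omega>. \<bar>X i \<omega>\<bar> \<partial>M) * (\<integral>\<omega>. H i \<omega> \<partial>M)"
      by (rule indep_var_lebesgue_integral[OF ind2 _ H_int]) (use X_int in auto)
    finally show ?thesis unfolding EA_def r_def using X_mean[of abs i] by simp
  qed
  have EA_nn: "EA \<ge> 0" unfolding EA_def by auto
  have sum_abs: "summable (\<lambda>i. \<integral>\<omega>. norm (tm i \<omega>) \<partial>M)"
    unfolding tm_absE using r_summable by (rule summable_mult)
  have AE_sum: "AE \<omega> in M. summable (\<lambda>i. norm (tm i \<omega>))"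
  proof -
    have tmm[measurable]: "tm i \<in> borel_measurable M" for i using tm_int by auto
    have "(\<integral>\<^sup>+ \<omega>. (\<Sum>i. ennreal (norm (tm i \<omega>))) \<partial>M) = (\<Sum>i. \<integral>\<^sup>+ \<omega>. ennreal (norm (tm i \<omega>)) \<partial>M)"
      by (rule nn_integral_suminf) auto
    also have "\<dots> = (\<Sum>i. ennreal (\<integral>\<omega>. norm (tm i \<omega>) \<partial>M))"
      using tm_int by (subst nn_integral_eq_integral) auto
    also have "\<dots> = ennreal (\<Sum>i. \<integral>\<omega>. norm (tm i \<omega>) \<partial>M)"
      using sum_abs by (intro suminf_ennreal2) auto
    finally have "(\<integral>\<^sup>+ \<omega>. (\<Sum>i. ennreal (norm (tm i \<omega>))) \<partial>M) \<noteq> \<infinity>" by simp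
    then have "AE \<omega> in M. (\<Sum>i. ennreal (norm (tm i \<omega>))) \<noteq> \<infinity>"
      by (intro nn_integral_PInf_AE) auto
    then show ?thesis
      by eventually_elim (intro summable_suminf_not_top, auto)
  qed
  have "(\<integral>\<omega>. Zdelta J X L \<delta> t \<omega> \<partial>M) = (\<integral>\<omega>. (\<Sum>i. tm i \<omega>) \<partial>M)"
    unfolding Zdelta_def tm_def ..
  also have "\<dots> = (\<Sum>i. \<integral>\<omega>. tm i \<omega> \<partial>M)"
    by (rule integral_suminf[OF tm_int AE_sum sum_abs])
  also have "\<dots> = (\<integral>\<omega>. X 0 \<omega> \<partial>M) * R t \<delta>"
    unfolding tm_E using sums_mult[OF r_sums, of "\<integral>\<omega>. X 0 \<omega> \<partial>M"] by (simp add: sums_iff)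
  finally show ?thesis .
qed

end



context fpp begin

lemma expL:
  assumes d: "\<delta> \<ge> 0"
  shows "(\<integral>\<omega>. exp (- \<delta> * L 0 \<omega>) \<partial>M) = \<beta> / (\<beta> + \<delta>)"
proof -
  have "(\<integral>\<^sup>+ \<omega>. ennreal (exp (- \<delta> * L 0 \<omega>)) \<partial>M) =
      (\<integral>\<^sup>+ l. ennreal (exponential_density \<beta> l) * ennreal (exp (- \<delta> * l)) \<partial>lborel)"
    by (rule distributed_nn_integral[OF L_exp, symmetric]) simp
  also have "\<dots> = (\<integral>\<^sup>+ l. ennreal (\<beta> * exp (- (\<beta> + \<delta>) * l)) * indicator {0..} l \<partial>lborel)"
  proof (rule nn_integral_cong)
    fix l :: real
    show "ennreal (exponential_density \<beta> l) * ennreal (exp (- \<delta> * l)) =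
        ennreal (\<beta> * exp (- (\<beta> + \<delta>) * l)) * indicator {0..} l"
    proof (cases "l < 0")
      case False
      have "ennreal (\<beta> * exp (- l * \<beta>)) * ennreal (exp (- \<delta> * l)) = ennreal (\<beta> * exp (- l * \<beta>) * exp (- \<delta> * l))"
        using be by (intro ennreal_mult[symmetric]) auto
      also have "\<beta> * exp (- l * \<beta>) * exp (- \<delta> * l) = \<beta> * exp (- (\<beta> + \<delta>) * l)"
        by (simp add: mult.assoc mult_exp_exp algebra_simps)
      finally show ?thesis using False unfolding exponential_density_def by simp
    qed (simp add: exponential_density_def)
  qed
  also have "\<dots> = ennreal (\<beta> * (exp (- (\<beta> + \<delta>) * 0) / (\<beta> + \<delta>)))"
  proof (rule nn_integral_has_integral_lebesgue')
    show "((\<lambda>l. \<beta> * exp (- (\<beta> + \<delta>) * l)) has_integral \<beta> * (exp (- (\<beta> + \<delta>) * 0) / (\<beta> + \<delta>))) {0..}"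
      using be d by (intro has_integral_mult_right has_integral_exp_minus_to_infinity) auto
  qed (use be in auto)
  finally have "(\<integral>\<^sup>+ \<omega>. ennreal (exp (- \<delta> * L 0 \<omega>)) \<partial>M) = ennreal (\<beta> / (\<beta> + \<delta>))" by simp
  then show ?thesis using be d
    by (subst (asm) nn_integral_eq_integrable) auto
qed

lemma EL: "(\<integral>\<omega>. L 0 \<omega> \<partial>M) = 1 / \<beta>"
  using exponential_distributed_expectation[OF be L_exp] .

lemma asymp_gen:
  assumes d: "\<delta> \<ge> 0"
  shows "(\<lambda>t. \<integral>\<omega>. Zdelta J X L \<delta> t \<omega> \<partial>M) \<sim>[at_top]
    (\<lambda>t. (\<integral>\<omega>. X 0 \<omega> \<partial>M) * lam / Gamma \<alpha> * (\<beta> / (\<beta> + \<delta>)) * exp (- \<delta> * t) * (t powr (\<alpha> - 1) / \<beta>))"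
proof -
  define C where "C = (\<integral>\<omega>. X 0 \<omega> \<partial>M) * lam / Gamma \<alpha> * (\<beta> / (\<beta> + \<delta>))"
  have ev: "eventually (\<lambda>t. (\<integral>\<omega>. Zdelta J X L \<delta> t \<omega> \<partial>M) = C * exp (- \<delta> * t) * (exp (- \<beta> * t) * Iv \<alpha> \<beta> t)) at_top"
    using eventually_gt_at_top[of 0]
  proof eventually_elim
    case (elim t)
    have "exp (- (\<beta> + \<delta>) * t) = exp (- \<delta> * t) * exp (- \<beta> * t)"
      by (simp add: mult_exp_exp algebra_simps)
    then show ?case using main_expect[OF elim d] unfolding R_def K_def C_def by simp
  qed
  have ev2: "eventually (\<lambda>t. (\<integral>\<omega>. X 0 \<omega> \<partial>M) * lam / Gamma \<alpha> * (\<beta> / (\<beta> + \<delta>)) * exp (- \<delta> * t) * (t powr (\<alpha> - 1) / \<beta>) =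
     C * exp (- \<delta> * t) * (t powr (\<alpha> - 1) / \<beta>)) at_top"
    unfolding C_def by simp
  have main: "(\<lambda>t. C * exp (- \<delta> * t) * (exp (- \<beta> * t) * Iv \<alpha> \<beta> t)) \<sim>[at_top] (\<lambda>t. C * exp (- \<delta> * t) * (t powr (\<alpha> - 1) / \<beta>))"
  proof (cases "C = 0")
    case True
    then show ?thesis by simp
  next
    case False
    show ?thesis
    proof (rule asymp_equivI')
      have "eventually (\<lambda>t. Iv \<alpha> \<beta> t / (exp (\<beta> * t) * t powr (\<alpha> - 1) / \<beta>) =
          C * exp (- \<delta> * t) * (exp (- \<beta> * t) * Iv \<alpha> \<beta> t) / (C * exp (- \<delta> * t) * (t powr (\<alpha> - 1) / \<beta>))) at_top"
        using eventually_gt_at_top[of 0]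
      proof eventually_elim
        case (elim t)
        have "exp (- \<beta> * t) * exp (\<beta> * t) = 1" by (simp add: mult_exp_exp)
        then show ?case using False be elim by (simp add: field_simps)
      qed
      then show "((\<lambda>t. C * exp (- \<delta> * t) * (exp (- \<beta> * t) * Iv \<alpha> \<beta> t) / (C * exp (- \<delta> * t) * (t powr (\<alpha> - 1) / \<beta>))) \<longlongrightarrow> 1) at_top"
        by (rule Lim_transform_eventually[OF Iv_asymp[OF al be]])
    qed
  qed
  show ?thesis
    using asymp_equiv_cong[OF ev ev2] main by blast
qed

end


theorem proposition2:
  fixes M :: "'a measure" and lam \<alpha> \<beta> \<mu>1 :: real and J X L :: "nat \<Rightarrow> 'a \<Rightarrow> real"
  assumes "prob_space M"
    and "lam > 0" and "0 < \<alpha>" and "\<alpha> \<le> 1" and "\<beta> > 0"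
    and "fractional_poisson_renewal M lam \<alpha> J"
    and "\<forall>i. X i \<in> borel_measurable M"
    and "\<forall>i. distr M borel (X i) = distr M borel (X 0)"
    and "integrable M (X 0)"
    and "\<mu>1 = (\<integral>\<omega>. X 0 \<omega> \<partial>M)"
    and "\<forall>i. L i \<in> borel_measurable M"
    and "\<forall>i. distr M borel (L i) = distr M borel (L 0)"
    and "\<forall>x\<ge>0. measure M {\<omega> \<in> space M. L 0 \<omega> > x} = exp (- \<beta> * x)"
    and "prob_space.indep_vars M (\<lambda>_. borel) (case_sum J (case_sum X L)) UNIV"
  shows
    "(\<forall>t>0. (\<integral>\<omega>. Zdelta J X L 0 t \<omega> \<partial>M)
              = \<mu>1 * lam * exp (- \<beta> * t) * t powr \<alpha> / Gamma (1 + \<alpha>) * hyp1F1 \<alpha> (1 + \<alpha>) (\<beta> * t)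
          \<and> \<mu>1 * lam * exp (- \<beta> * t) * t powr \<alpha> / Gamma (1 + \<alpha>) * hyp1F1 \<alpha> (1 + \<alpha>) (\<beta> * t)
              = \<mu>1 * exp (- \<beta> * t) * hyp1F1 \<alpha> (1 + \<alpha>) (\<beta> * t) * fpp_renewal_fun lam \<alpha> t)
     \<and> (\<forall>\<delta>>0. \<forall>t>0. (\<integral>\<omega>. Zdelta J X L \<delta> t \<omega> \<partial>M)
              = \<mu>1 * lam * (\<integral>\<omega>. exp (- \<delta> * L 0 \<omega>) \<partial>M) * exp (- (\<beta> + \<delta>) * t) * t powr \<alpha>
                  / Gamma (1 + \<alpha>) * hyp1F1 \<alpha> (1 + \<alpha>) (\<beta> * t))
     \<and> (\<forall>\<delta>>0. (\<integral>\<omega>. exp (- \<delta> * L 0 \<omega>) \<partial>M) = \<beta> / (\<beta> + \<delta>))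
     \<and> ((\<lambda>t. \<integral>\<omega>. Zdelta J X L 0 t \<omega> \<partial>M)
          \<sim>[at_top] (\<lambda>t. \<mu>1 * lam / (\<beta> * Gamma \<alpha>) * t powr (\<alpha> - 1)))
     \<and> (\<forall>t>0. \<mu>1 * lam / (\<beta> * Gamma \<alpha>) * t powr (\<alpha> - 1)
              = \<mu>1 * (\<integral>\<omega>. L 0 \<omega> \<partial>M) * (lam * t powr (\<alpha> - 1) / Gamma \<alpha>))
     \<and> (\<forall>\<delta>>0. (\<lambda>t. \<integral>\<omega>. Zdelta J X L \<delta> t \<omega> \<partial>M)
          \<sim>[at_top] (\<lambda>t. \<mu>1 * lam * (\<integral>\<omega>. exp (- \<delta> * L 0 \<omega>) \<partial>M) / (\<beta> * Gamma \<alpha>)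
                          * exp (- \<delta> * t) * t powr (\<alpha> - 1)))"
  proof -
  interpret fpp M lam \<alpha> \<beta> J X L
    by (intro fpp.intro fpp_axioms.intro) (use assms in auto)
  have mu: "\<mu>1 = (\<integral>\<omega>. X 0 \<omega> \<partial>M)" using assms by simp
  have G: "Gamma (1 + \<alpha>) = \<alpha> * Gamma \<alpha>" by (rule Gamma_1a)
  have Gp: "Gamma \<alpha> > 0" by (rule Gamma_pos)
  have Gn: "Gamma \<alpha> \<noteq> 0" "\<alpha> \<noteq> 0" "\<alpha> * Gamma \<alpha> \<noteq> 0"
    using Gp al mult_pos_pos[OF al(1) Gp] by linarith+
  have c1: "\<forall>t>0. (\<integral>\<omega>. Zdelta J X L 0 t \<omega> \<partial>M)
              = \<mu>1 * lam * exp (- \<beta> * t) * t powr \<alpha> / Gamma (1 + \<alpha>) * hyp1F1 \<alpha> (1 + \<alpha>) (\<beta> * t)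
          \<and> \<mu>1 * lam * exp (- \<beta> * t) * t powr \<alpha> / Gamma (1 + \<alpha>) * hyp1F1 \<alpha> (1 + \<alpha>) (\<beta> * t)
              = \<mu>1 * exp (- \<beta> * t) * hyp1F1 \<alpha> (1 + \<alpha>) (\<beta> * t) * fpp_renewal_fun lam \<alpha> t"
  proof (intro allI impI conjI)
    fix t :: real assume t: "t > 0"
    show "(\<integral>\<omega>. Zdelta J X L 0 t \<omega> \<partial>M)
              = \<mu>1 * lam * exp (- \<beta> * t) * t powr \<alpha> / Gamma (1 + \<alpha>) * hyp1F1 \<alpha> (1 + \<alpha>) (\<beta> * t)"
      using main_expect[OF t order.refl] be al Gp Gn unfolding mu[symmetric] R_def K_def Iv_def G
      by (simp add: field_simps)
    show "\<mu>1 * lam * exp (- \<beta> * t) * t powr \<alpha> / Gamma (1 + \<alpha>) * hyp1F1 \<alpha> (1 + \<alpha>) (\<beta> * t)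
              = \<mu>1 * exp (- \<beta> * t) * hyp1F1 \<alpha> (1 + \<alpha>) (\<beta> * t) * fpp_renewal_fun lam \<alpha> t"
      unfolding fpp_renewal_fun_def by (simp add: field_simps)
  qed
  have c2: "\<forall>\<delta>>0. \<forall>t>0. (\<integral>\<omega>. Zdelta J X L \<delta> t \<omega> \<partial>M)
              = \<mu>1 * lam * (\<integral>\<omega>. exp (- \<delta> * L 0 \<omega>) \<partial>M) * exp (- (\<beta> + \<delta>) * t) * t powr \<alpha>
                  / Gamma (1 + \<alpha>) * hyp1F1 \<alpha> (1 + \<alpha>) (\<beta> * t)"
  proof (intro allI impI)
    fix \<delta> t :: real assume d: "\<delta> > 0" and t: "t > 0"
    show "(\<integral>\<omega>. Zdelta J X L \<delta> t \<omega> \<partial>M)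
              = \<mu>1 * lam * (\<integral>\<omega>. exp (- \<delta> * L 0 \<omega>) \<partial>M) * exp (- (\<beta> + \<delta>) * t) * t powr \<alpha>
                  / Gamma (1 + \<alpha>) * hyp1F1 \<alpha> (1 + \<alpha>) (\<beta> * t)"
      using main_expect[OF t less_imp_le[OF d]] be al Gp Gn d
      unfolding mu[symmetric] R_def K_def Iv_def G expL[OF less_imp_le[OF d]]
      by (simp add: field_simps)
  qed
  have c3: "\<forall>\<delta>>0. (\<integral>\<omega>. exp (- \<delta> * L 0 \<omega>) \<partial>M) = \<beta> / (\<beta> + \<delta>)"
    using expL by auto
  have c4: "(\<lambda>t. \<integral>\<omega>. Zdelta J X L 0 t \<omega> \<partial>M)
          \<sim>[at_top] (\<lambda>t. \<mu>1 * lam / (\<beta> * Gamma \<alpha>) * t powr (\<alpha> - 1))"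
  proof -
    have "(\<lambda>t. (\<integral>\<omega>. X 0 \<omega> \<partial>M) * lam / Gamma \<alpha> * (\<beta> / (\<beta> + 0)) * exp (- 0 * t) * (t powr (\<alpha> - 1) / \<beta>))
        = (\<lambda>t. \<mu>1 * lam / (\<beta> * Gamma \<alpha>) * t powr (\<alpha> - 1))"
      using be Gp unfolding mu by (intro ext) (simp add: field_simps)
    then show ?thesis using asymp_gen[of 0] by simp
  qed
  have c5: "\<forall>t>0. \<mu>1 * lam / (\<beta> * Gamma \<alpha>) * t powr (\<alpha> - 1)
              = \<mu>1 * (\<integral>\<omega>. L 0 \<omega> \<partial>M) * (lam * t powr (\<alpha> - 1) / Gamma \<alpha>)"
    unfolding EL using be Gp by (simp add: field_simps)
  have c6: "\<forall>\<delta>>0. (\<lambda>t. \<integral>\<omega>. Zdelta J X L \<delta> t \<omega> \<partial>M)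
          \<sim>[at_top] (\<lambda>t. \<mu>1 * lam * (\<integral>\<omega>. exp (- \<delta> * L 0 \<omega>) \<partial>M) / (\<beta> * Gamma \<alpha>)
                          * exp (- \<delta> * t) * t powr (\<alpha> - 1))"
  proof (intro allI impI)
    fix \<delta> :: real assume d: "\<delta> > 0"
    have "(\<lambda>t. (\<integral>\<omega>. X 0 \<omega> \<partial>M) * lam / Gamma \<alpha> * (\<beta> / (\<beta> + \<delta>)) * exp (- \<delta> * t) * (t powr (\<alpha> - 1) / \<beta>))
        = (\<lambda>t. \<mu>1 * lam * (\<integral>\<omega>. exp (- \<delta> * L 0 \<omega>) \<partial>M) / (\<beta> * Gamma \<alpha>)
                          * exp (- \<delta> * t) * t powr (\<alpha> - 1))"
    proof -
      have "(\<beta> + \<delta>) * Gamma \<alpha> > 0" using be d Gp by (intro mult_pos_pos) auto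
      then have p1: "\<beta> * Gamma \<alpha> + \<delta> * Gamma \<alpha> > 0" by (simp add: algebra_simps)
      have p2: "\<beta> * (\<beta> * Gamma \<alpha>) + \<beta> * (\<delta> * Gamma \<alpha>) > 0"
        using mult_pos_pos[OF be p1] by (simp add: algebra_simps)
      have nz: "\<beta> * Gamma \<alpha> + \<delta> * Gamma \<alpha> \<noteq> 0" "\<beta> \<noteq> 0" "\<beta> + \<delta> \<noteq> 0"
          "\<beta> * (\<beta> * Gamma \<alpha>) + \<beta> * (\<delta> * Gamma \<alpha>) \<noteq> 0"
        using be d p1 p2 by linarith+
      show ?thesis using be Gp Gn nz d unfolding mu expL[OF less_imp_le[OF d]] by (intro ext) (simp add: field_simps)
    qed
    then show "(\<lambda>t. \<integral>\<omega>. Zdelta J X L \<delta> t \<omega> \<partial>M)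
          \<sim>[at_top] (\<lambda>t. \<mu>1 * lam * (\<integral>\<omega>. exp (- \<delta> * L 0 \<omega>) \<partial>M) / (\<beta> * Gamma \<alpha>)
                          * exp (- \<delta> * t) * t powr (\<alpha> - 1))"
      using asymp_gen[OF less_imp_le[OF d]] by simp
  qed
  show ?thesis using c1 c2 c3 c4 c5 c6 by blast
qed

end
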